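(* Let $d=2k$ and let $Q=(Q_{ij})_{i,j=1}^k$ be the $d\times d$ block-diagonal matrix with $2\times2$ blocks, $Q_{ij}=0$ for $i\ne j$ and $Q_{ii}=\begin{pmatrix}1&\rho_i\\ \rho_i&1\end{pmatrix}$, where $0\le\rho_i<1$ for $i=1,\dots,k$. Consider the coordinate-wise pseudo-spectral gap $\mathrm{PG}(p)=\lambda_{\min}(D_pQ)$ for probability vectors $p\in\mathbb{R}^d$ with positive entries, where $D_p=\mathrm{diag}(p_1/Q_{11},\dots,p_d/Q_{dd})$ (here $Q_{jj}$ denotes the $j$-th diagonal entry of $Q$), and let $p^{\mathrm{opt}}$ be its maximiser over such $p$. Define $$\alpha_i=\frac{\prod_{l=1,l\ne i}^k(1-\rho_l)}{\sum_{l=1}^k\prod_{j=1,j\ne l}^k(1-\rho_j)}.$$ Then $p^{\mathrm{opt}}_{2i-1}=p^{\mathrm{opt}}_{2i}=\alpha_i/2$ for $i=1,\dots,k$, and $$\mathrm{PG}(p^{\mathrm{opt}})=\frac{\prod_{l=1}^k(1-\rho_l)}{2\sum_{l=1}^k\prod_{j=1,j\ne l}^k(1-\rho_j)}.$$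
   Context: $Q$ is the precision (inverse covariance) matrix of a target distribution on $\mathbb{R}^d$, and the Gibbs sampler is coordinate-wise ($s=d$ blocks of size one). $\lambda_{\min}$ denotes the smallest eigenvalue. *)

theory Defs
  imports Complex_Main
begin

text \<open>Square d x d real matrices are represented as functions nat => nat => real,
  with indices ranging over {1..d} (1-based, as in the paper).\<close>

definition mat_eigenvalue :: "nat \<Rightarrow> (nat \<Rightarrow> nat \<Rightarrow> real) \<Rightarrow> real \<Rightarrow> bool" where
  "mat_eigenvalue d M \<mu> \<longleftrightarrow>
     (\<exists>v :: nat \<Rightarrow> real. (\<exists>j\<in>{1..d}. v j \<noteq> 0) \<and>
        (\<forall>i\<in>{1..d}. (\<Sum>j=1..d. M i j * v j) = \<mu> * v i))"

definition lambda_min :: "nat \<Rightarrow> (nat \<Rightarrow> nat \<Rightarrow> real) \<Rightarrow> real" where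
  "lambda_min d M = Min {\<mu>. mat_eigenvalue d M \<mu>}"

definition DpQ :: "(nat \<Rightarrow> nat \<Rightarrow> real) \<Rightarrow> (nat \<Rightarrow> real) \<Rightarrow> nat \<Rightarrow> nat \<Rightarrow> real" where
  "DpQ Q p i j = (p i / Q i i) * Q i j"

definition PG :: "nat \<Rightarrow> (nat \<Rightarrow> nat \<Rightarrow> real) \<Rightarrow> (nat \<Rightarrow> real) \<Rightarrow> real" where
  "PG d Q p = lambda_min d (DpQ Q p)"

definition pos_prob_vec :: "nat \<Rightarrow> (nat \<Rightarrow> real) \<Rightarrow> bool" where
  "pos_prob_vec d p \<longleftrightarrow> (\<forall>i\<in>{1..d}. p i > 0) \<and> (\<Sum>i=1..d. p i) = 1"

text \<open>The block-diagonal 2k x 2k matrix with 2x2 blocks [[1, rho_i],[rho_i, 1]];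
  coordinate i (1-based) belongs to block (i+1) div 2.\<close>
definition blockQ :: "(nat \<Rightarrow> real) \<Rightarrow> nat \<Rightarrow> nat \<Rightarrow> real" where
  "blockQ \<rho> i j =
     (if i = j then 1
      else if (i + 1) div 2 = (j + 1) div 2 then \<rho> ((i + 1) div 2)
      else 0)"

definition alpha :: "nat \<Rightarrow> (nat \<Rightarrow> real) \<Rightarrow> nat \<Rightarrow> real" where
  "alpha k \<rho> i =
     (\<Prod>l\<in>{1..k} - {i}. 1 - \<rho> l) / (\<Sum>l=1..k. \<Prod>j\<in>{1..k} - {l}. 1 - \<rho> j)"

end

theory Submission imports Defs begin

lemma div_iff: "(m::nat) \<ge> 1 \<Longrightarrow> ((j+1) div 2 = m) = (j = 2*m-1 \<or> j = 2*m)"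
  by presburger

lemma row_odd:
  assumes "m \<ge> 1" "m \<le> k"
  shows "(\<Sum>j=1..2*k. DpQ (blockQ \<rho>) p (2*m-1) j * v j) = p (2*m-1) * (v (2*m-1) + \<rho> m * v (2*m))"
proof -
  have h: "DpQ (blockQ \<rho>) p (2*m-1) j * v j = (if j = 2*m-1 then p(2*m-1) * v (2*m-1) else 0) + (if j = 2*m then p(2*m-1)*\<rho> m * v(2*m) else 0)" for j
  proof -
    have e: "(2*m-1+1) div 2 = m" using assms by simp
    show ?thesis using assms div_iff[OF assms(1), of j] by (auto simp: DpQ_def blockQ_def e)
  qed
  have mem: "2*m-1 \<in> {1..2*k}" "2*m \<in> {1..2*k}" using assms by auto
  from h have "(\<Sum>j=1..2*k. DpQ (blockQ \<rho>) p (2*m-1) j * v j) = (\<Sum>j=1..2*k. (if j = 2*m-1 then p(2*m-1) * v (2*m-1) else 0) + (if j = 2*m then p(2*m-1)*\<rho> m * v(2*m) else 0))"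
    by simp
  also have "\<dots> = p(2*m-1) * v (2*m-1) + p(2*m-1)*\<rho> m * v(2*m)"
    by (simp only: sum.distrib sum.delta[OF finite_atLeastAtMost] mem if_True)
  finally show ?thesis by (simp add: algebra_simps)
qed

lemma row_even:
  assumes "m \<ge> 1" "m \<le> k"
  shows "(\<Sum>j=1..2*k. DpQ (blockQ \<rho>) p (2*m) j * v j) = p (2*m) * (v (2*m) + \<rho> m * v (2*m-1))"
proof -
  have h: "DpQ (blockQ \<rho>) p (2*m) j * v j = (if j = 2*m then p(2*m) * v (2*m) else 0) + (if j = 2*m-1 then p(2*m)*\<rho> m * v(2*m-1) else 0)" for j
  proof -
    have e: "(2*m+1) div 2 = m" using assms by simp
    show ?thesis using assms div_iff[OF assms(1), of j] by (auto simp: DpQ_def blockQ_def e)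
  qed
  have mem: "2*m-1 \<in> {1..2*k}" "2*m \<in> {1..2*k}" using assms by auto
  from h have "(\<Sum>j=1..2*k. DpQ (blockQ \<rho>) p (2*m) j * v j) = (\<Sum>j=1..2*k. (if j = 2*m then p(2*m) * v (2*m) else 0) + (if j = 2*m-1 then p(2*m)*\<rho> m * v(2*m-1) else 0))"
    by simp
  also have "\<dots> = p(2*m) * v (2*m) + p(2*m)*\<rho> m * v(2*m-1)"
    by (simp only: sum.distrib sum.delta[OF finite_atLeastAtMost] mem if_True)
  finally show ?thesis by (simp add: algebra_simps)
qed

lemma sum_pairs: "(\<Sum>j=1..2*(k::nat). g j) = (\<Sum>m=1..k. g (2*m-1) + g (2*m))" for g :: "nat \<Rightarrow> real"
proof (induction k)
  case 0 then show ?case by simp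
next
  case (Suc k)
  have "{1..2*Suc k} = insert (2*k+2) (insert (2*k+1) {1..2*k})" by auto
  then have "(\<Sum>j=1..2*Suc k. g j) = g (2*k+2) + g(2*k+1) + (\<Sum>j=1..2*k. g j)" by simp
  then show ?case using Suc by simp
qed

definition lo :: "real \<Rightarrow> real \<Rightarrow> real \<Rightarrow> real" where
  "lo a b r = ((a+b) - sqrt((a-b)^2 + 4*a*b*r^2))/2"
definition hi :: "real \<Rightarrow> real \<Rightarrow> real \<Rightarrow> real" where
  "hi a b r = ((a+b) + sqrt((a-b)^2 + 4*a*b*r^2))/2"

lemma root_cases:
  assumes "a > 0" "b > 0" "(a-\<mu>)*(b-\<mu>) - a*b*r^2 = 0"
  shows "\<mu> = lo a b r \<or> \<mu> = hi a b r"
proof -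
  define D where "D = (a-b)^2 + 4*a*b*r^2"
  have D0: "D \<ge> 0" using assms unfolding D_def by (simp add: add_nonneg_nonneg)
  have "(2*\<mu>-(a+b))^2 = D" using assms(3) unfolding D_def by (simp add: algebra_simps power2_eq_square)
  also have "D = (sqrt D)^2" using D0 by simp
  finally have "2*\<mu>-(a+b) = sqrt D \<or> 2*\<mu>-(a+b) = - sqrt D"
    using power2_eq_iff by blast
  then show ?thesis unfolding lo_def hi_def D_def[symmetric] by auto
qed

lemma lo_root:
  assumes "a > 0" "b > 0"
  shows "(a - lo a b r)*(b - lo a b r) - a*b*r^2 = 0"
proof -
  define D where "D = (a-b)^2 + 4*a*b*r^2"
  define s where "s = sqrt D"
  have D0: "D \<ge> 0" using assms unfolding D_def by (simp add: add_nonneg_nonneg)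
  have sD: "s^2 = D" using D0 unfolding s_def by simp
  have l: "lo a b r = (a+b-s)/2" unfolding lo_def s_def D_def by simp
  have "(a - lo a b r)*(b - lo a b r) = (s^2 - (a-b)^2)/4"
    unfolding l by (simp add: field_simps power2_eq_square)
  then show ?thesis using sD unfolding D_def by simp
qed

lemma lo_le_hi: assumes "a > 0" "b > 0" shows "lo a b r \<le> hi a b r"
proof -
  have "0 \<le> (a-b)^2 + 4*a*b*r^2" using assms by (simp add: add_nonneg_nonneg)
  then show ?thesis unfolding lo_def hi_def by simp
qed

lemma lo_le_u:
  assumes "a > 0" "b > 0" "0 \<le> r" "r < 1"
  shows "lo a b r \<le> (a+b)*(1-r)/2" and "lo a b r = (a+b)*(1-r)/2 \<Longrightarrow> a = b"
proof -
  define D where "D = (a-b)^2 + 4*a*b*r^2"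
  have D0: "D \<ge> 0" using assms unfolding D_def by (simp add: add_nonneg_nonneg)
  have l: "lo a b r = (a+b-sqrt D)/2" unfolding lo_def D_def by simp
  have u: "(a+b)*(1-r)/2 = (a+b - (a+b)*r)/2" by (simp add: algebra_simps)
  have key: "((a+b)*r)^2 \<le> D" unfolding D_def
  proof -
    have "((a+b)*r)^2 = (a-b)^2*r^2 + 4*a*b*r^2" by (simp add: algebra_simps power2_eq_square)
    also have "(a-b)^2*r^2 \<le> (a-b)^2" using assms
      by (metis less_eq_real_def mult_left_le mult_le_one power_le_one zero_le_power2)
    finally show "((a+b)*r)^2 \<le> (a-b)^2 + 4*a*b*r^2" by simp
  qed
  have "(a+b)*r \<le> sqrt D" using key real_le_rsqrt by blast
  then show "lo a b r \<le> (a+b)*(1-r)/2" unfolding l u by (intro divide_right_mono) auto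
  assume "lo a b r = (a+b)*(1-r)/2"
  then have "sqrt D = (a+b)*r" unfolding l u by simp
  then have "D = ((a+b)*r)^2" using D0 by (metis real_sqrt_pow2)
  then have "(a-b)^2 * (1 - r^2) = 0" unfolding D_def by (simp add: algebra_simps power2_eq_square)
  moreover have "r^2 < 1" using assms by (metis abs_of_nonneg abs_square_less_1)
  ultimately show "a = b" by simp
qed

lemma lo_eq: assumes "a > 0" "r \<ge> 0" shows "lo a a r = a*(1-r)"
proof -
  have "sqrt ((a-a)^2 + 4*a*a*r^2) = 2*a*r"
    using assms by (simp add: real_sqrt_unique power2_eq_square)
  then have "lo a a r = (2*a - 2*a*r)/2" unfolding lo_def by simp
  then show ?thesis by (simp add: algebra_simps)
qed


lemma block_vec:
  fixes a b r \<mu> :: real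
  assumes "a > 0" "(a-\<mu>)*(b-\<mu>) - a*b*r^2 = 0"
  shows "\<exists>x y. (x \<noteq> 0 \<or> y \<noteq> 0) \<and> a*(x + r*y) = \<mu>*x \<and> b*(y + r*x) = \<mu>*y"
proof (cases "r = 0 \<and> \<mu> = a")
  case True
  have "a*(1 + r*0) = \<mu>*1 \<and> b*(0 + r*1) = \<mu>*0" using True by simp
  then show ?thesis by (metis one_neq_zero)
next
  case False
  have ne: "a*r \<noteq> 0 \<or> \<mu> - a \<noteq> 0" using False assms(1) by auto
  have e2: "b*((\<mu> - a) + r*(a*r)) = \<mu>*(\<mu> - a)"
    using assms(2) by (simp add: algebra_simps power2_eq_square)
  show ?thesis using ne e2
    by (intro exI[of _ "a*r"] exI[of _ "\<mu> - a"]) (simp add: algebra_simps)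
qed

lemma block_root:
  fixes a b r \<mu> x y :: real
  assumes "x \<noteq> 0 \<or> y \<noteq> 0" "a*(x + r*y) = \<mu>*x" "b*(y + r*x) = \<mu>*y"
  shows "(a-\<mu>)*(b-\<mu>) - a*b*r^2 = 0"
proof -
  have "((a-\<mu>)*(b-\<mu>) - a*b*r^2) * x = 0"
  proof -
    have "((a-\<mu>)*(b-\<mu>) - a*b*r^2) * x = (b-\<mu>)*((a-\<mu>)*x) - a*r*(b*r*x)"
      unfolding power2_eq_square by algebra
    also have "(a-\<mu>)*x = - a*r*y" using assms(2) by (simp add: algebra_simps)
    also have "b*r*x = \<mu>*y - b*y" using assms(3) by (simp add: algebra_simps)
    finally show ?thesis by (simp add: algebra_simps)
  qed
  moreover have "((a-\<mu>)*(b-\<mu>) - a*b*r^2) * y = 0"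
  proof -
    have "((a-\<mu>)*(b-\<mu>) - a*b*r^2) * y = (a-\<mu>)*((b-\<mu>)*y) - b*r*(a*r*y)"
      unfolding power2_eq_square by algebra
    also have "(b-\<mu>)*y = - b*r*x" using assms(3) by (simp add: algebra_simps)
    also have "a*r*y = \<mu>*x - a*x" using assms(2) by (simp add: algebra_simps)
    finally show ?thesis by (simp add: algebra_simps)
  qed
  ultimately show ?thesis using assms(1) by auto
qed

lemma idx_cases:
  fixes j k :: nat
  assumes "j \<in> {1..2*k}"
  obtains m where "m \<in> {1..k}" "j = 2*m-1 \<or> j = 2*m"
proof -
  have "(j+1) div 2 \<in> {1..k}" "j = 2*((j+1) div 2)-1 \<or> j = 2*((j+1) div 2)"
    using assms by auto
  then show ?thesis using that by blast
qed

lemma eig_root: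
  assumes "mat_eigenvalue (2*k) (DpQ (blockQ \<rho>) p) \<mu>"
  shows "\<exists>m\<in>{1..k}. (p(2*m-1)-\<mu>)*(p(2*m)-\<mu>) - p(2*m-1)*p(2*m)*(\<rho> m)^2 = 0"
proof -
  obtain v j where j: "j \<in> {1..2*k}" "v j \<noteq> 0"
    and ev: "\<forall>i\<in>{1..2*k}. (\<Sum>j=1..2*k. DpQ (blockQ \<rho>) p i j * v j) = \<mu> * v i"
    using assms unfolding mat_eigenvalue_def by blast
  obtain m where m: "m \<in> {1..k}" "j = 2*m-1 \<or> j = 2*m" using idx_cases[OF j(1)] by blast
  have mem: "2*m-1 \<in> {1..2*k}" "2*m \<in> {1..2*k}" using m by auto
  have e1: "p(2*m-1)*(v(2*m-1) + \<rho> m * v(2*m)) = \<mu> * v(2*m-1)"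
    using ev mem(1) row_odd[of m k \<rho> p v] m(1) by auto
  have e2: "p(2*m)*(v(2*m) + \<rho> m * v(2*m-1)) = \<mu> * v(2*m)"
    using ev mem(2) row_even[of m k \<rho> p v] m(1) by auto
  have "v(2*m-1) \<noteq> 0 \<or> v(2*m) \<noteq> 0" using m(2) j(2) by auto
  then show ?thesis using block_root[OF _ e1 e2] m(1) by blast
qed

lemma eig_of_root:
  assumes "m \<in> {1..k}" "p(2*m-1) > 0"
    and "(p(2*m-1)-\<mu>)*(p(2*m)-\<mu>) - p(2*m-1)*p(2*m)*(\<rho> m)^2 = 0"
  shows "mat_eigenvalue (2*k) (DpQ (blockQ \<rho>) p) \<mu>"
proof -
  obtain x y where xy: "x \<noteq> 0 \<or> y \<noteq> 0" "p(2*m-1)*(x + \<rho> m*y) = \<mu>*x"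
    "p(2*m)*(y + \<rho> m*x) = \<mu>*y"
    using block_vec[OF assms(2,3)] by blast
  define v where "v i = (if i = 2*m-1 then x else if i = 2*m then y else 0)" for i
  have m1: "m \<ge> 1" using assms(1) by auto
  have vx: "v (2*m-1) = x" and vy: "v (2*m) = y" using m1 unfolding v_def by auto
  have nz: "\<exists>j\<in>{1..2*k}. v j \<noteq> 0"
  proof (cases "x \<noteq> 0")
    case True then show ?thesis using assms(1) vx by (intro bexI[of _ "2*m-1"]) auto
  next
    case False then show ?thesis using xy(1) assms(1) vy by (intro bexI[of _ "2*m"]) auto
  qed
  have "\<forall>i\<in>{1..2*k}. (\<Sum>j=1..2*k. DpQ (blockQ \<rho>) p i j * v j) = \<mu> * v i"
  proof
    fix i assume i: "i \<in> {1..2*k}"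
    obtain m' where m': "m' \<in> {1..k}" "i = 2*m'-1 \<or> i = 2*m'" using idx_cases[OF i] by blast
    show "(\<Sum>j=1..2*k. DpQ (blockQ \<rho>) p i j * v j) = \<mu> * v i"
    proof (cases "m' = m")
      case True
      then show ?thesis using m' row_odd[of m k \<rho> p v] row_even[of m k \<rho> p v] assms(1) xy vx vy
        by auto
    next
      case False
      have z: "v (2*m'-1) = 0" "v (2*m') = 0" using False m' m1 unfolding v_def by auto
      show ?thesis using m' row_odd[of m' k \<rho> p v] row_even[of m' k \<rho> p v] z by auto
    qed
  qed
  then show ?thesis unfolding mat_eigenvalue_def using nz by blast
qed


lemma PG_eq:
  assumes pos: "\<forall>i\<in>{1..2*k}. p i > 0" and k: "k \<ge> 1"
  shows "PG (2*k) (blockQ \<rho>) p = Min ((\<lambda>m. lo (p(2*m-1)) (p(2*m)) (\<rho> m)) ` {1..k})"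
proof -
  define S where "S = {\<mu>. mat_eigenvalue (2*k) (DpQ (blockQ \<rho>) p) \<mu>}"
  define L where "L m = lo (p(2*m-1)) (p(2*m)) (\<rho> m)" for m
  define H where "H m = hi (p(2*m-1)) (p(2*m)) (\<rho> m)" for m
  have ab: "p(2*m-1) > 0" "p(2*m) > 0" if "m \<in> {1..k}" for m
  proof -
    have "2*m-1 \<in> {1..2*k}" "2*m \<in> {1..2*k}" using that by auto
    then show "p(2*m-1) > 0" "p(2*m) > 0" using pos by auto
  qed
  have LS: "L ` {1..k} \<subseteq> S"
  proof
    fix \<mu> assume "\<mu> \<in> L ` {1..k}"
    then obtain m where m: "m \<in> {1..k}" "\<mu> = L m" by blast
    show "\<mu> \<in> S" unfolding S_def using eig_of_root[OF m(1) ab(1)[OF m(1)] lo_root[OF ab[OF m(1)]]] m(2)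
      unfolding L_def by simp
  qed
  have SU: "S \<subseteq> (\<Union>m\<in>{1..k}. {L m, H m})"
  proof
    fix \<mu> assume "\<mu> \<in> S"
    then obtain m where m: "m \<in> {1..k}" "(p(2*m-1)-\<mu>)*(p(2*m)-\<mu>) - p(2*m-1)*p(2*m)*(\<rho> m)^2 = 0"
      using eig_root unfolding S_def by blast
    show "\<mu> \<in> (\<Union>m\<in>{1..k}. {L m, H m})" using root_cases[OF ab[OF m(1)] m(2)] m(1)
      unfolding L_def H_def by blast
  qed
  have fin: "finite S" using SU by (rule finite_subset) auto
  have ne: "L ` {1..k} \<noteq> {}" using k by auto
  have ge: "\<mu> \<ge> Min (L ` {1..k})" if mu: "\<mu> \<in> S" for \<mu>
  proof -
    obtain m where m: "m \<in> {1..k}" "\<mu> = L m \<or> \<mu> = H m" using SU mu by blast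
    have "L m \<le> \<mu>" using m(2) lo_le_hi[OF ab[OF m(1)]] unfolding L_def H_def by auto
    moreover have "Min (L ` {1..k}) \<le> L m" using m(1) by simp
    ultimately show ?thesis by linarith
  qed
  have "Min S \<le> Min (L ` {1..k})" using Min_antimono[OF LS ne fin] .
  moreover have "Min S \<ge> Min (L ` {1..k})" using ge fin ne LS by (subst Min_ge_iff) auto
  ultimately have "Min S = Min (L ` {1..k})" by linarith
  then show ?thesis unfolding PG_def lambda_min_def S_def L_def by simp
qed

lemma PG_block_ge:
  assumes pos: "\<forall>i\<in>{1..2*k}. p i > 0" and k: "k \<ge> 1" and m: "m \<in> {1..k}"
    and t: "PG (2*k) (blockQ \<rho>) p \<ge> t"
  shows "lo (p(2*m-1)) (p(2*m)) (\<rho> m) \<ge> t"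
proof -
  have "Min ((\<lambda>m. lo (p(2*m-1)) (p(2*m)) (\<rho> m)) ` {1..k}) \<le> lo (p(2*m-1)) (p(2*m)) (\<rho> m)"
    using m by simp
  then show ?thesis using t PG_eq[OF pos k, of \<rho>] by linarith
qed


theorem proposition1:
  fixes k :: nat and \<rho> :: "nat \<Rightarrow> real"
  assumes k: "k \<ge> 1"
    and rho: "\<forall>i\<in>{1..k}. 0 \<le> \<rho> i \<and> \<rho> i < 1"
  shows "(\<exists>p. pos_prob_vec (2 * k) p \<and>
            (\<forall>q. pos_prob_vec (2 * k) q \<longrightarrow> PG (2 * k) (blockQ \<rho>) q \<le> PG (2 * k) (blockQ \<rho>) p))
     \<and> (\<forall>popt. pos_prob_vec (2 * k) popt \<and>
            (\<forall>q. pos_prob_vec (2 * k) q \<longrightarrow> PG (2 * k) (blockQ \<rho>) q \<le> PG (2 * k) (blockQ \<rho>) popt)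
          \<longrightarrow> (\<forall>i\<in>{1..k}. popt (2 * i - 1) = alpha k \<rho> i / 2 \<and> popt (2 * i) = alpha k \<rho> i / 2)
            \<and> PG (2 * k) (blockQ \<rho>) popt =
                (\<Prod>l=1..k. 1 - \<rho> l) / (2 * (\<Sum>l=1..k. \<Prod>j\<in>{1..k} - {l}. 1 - \<rho> j)))"
proof -
  define w where "w l = 1 / (1 - \<rho> l)" for l
  define W where "W = (\<Sum>l=1..k. w l)"
  define P where "P = (\<Prod>l=1..k. 1 - \<rho> l)"
  have wpos: "w l > 0" if "l \<in> {1..k}" for l using rho that unfolding w_def by auto
  have Wpos: "W > 0" unfolding W_def using wpos k by (intro sum_pos) auto
  have Ppos: "P > 0" unfolding P_def using rho by (intro prod_pos) auto
  have prodrem: "(\<Prod>j\<in>{1..k} - {l}. 1 - \<rho> j) = P * w l" if l: "l \<in> {1..k}" for l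
  proof -
    have "P = (1 - \<rho> l) * (\<Prod>j\<in>{1..k} - {l}. 1 - \<rho> j)"
      unfolding P_def using l by (simp add: prod.remove)
    moreover have "1 - \<rho> l > 0" using rho l by auto
    ultimately show ?thesis unfolding w_def by (simp add: field_simps)
  qed
  have sumrem: "(\<Sum>l=1..k. \<Prod>j\<in>{1..k} - {l}. 1 - \<rho> j) = P * W"
    unfolding W_def sum_distrib_left using prodrem by (intro sum.cong) auto
  have alpha_eq: "alpha k \<rho> i = w i / W" if "i \<in> {1..k}" for i
    unfolding alpha_def using prodrem[OF that] sumrem Ppos by simp
  have target: "(\<Prod>l=1..k. 1 - \<rho> l) / (2 * (\<Sum>l=1..k. \<Prod>j\<in>{1..k} - {l}. 1 - \<rho> j)) = 1/(2*W)"
    unfolding sumrem P_def[symmetric] using Ppos by simp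
  define c where "c = 1/(2*W)"
  have cpos: "c > 0" unfolding c_def using Wpos by simp
  define ps where "ps j = w ((j+1) div 2) / (2*W)" for j
  have ps_blk: "ps (2*m-1) = w m / (2*W)" "ps (2*m) = w m / (2*W)" if "m \<ge> 1" for m
    unfolding ps_def using that by (simp_all add: div_iff)
  have pos_ps: "\<forall>i\<in>{1..2*k}. ps i > 0"
  proof
    fix i assume i: "i \<in> {1..2*k}"
    obtain m where m: "m \<in> {1..k}" "i = 2*m-1 \<or> i = 2*m" using idx_cases[OF i] by blast
    show "ps i > 0" using m ps_blk[of m] wpos[OF m(1)] Wpos by auto
  qed
  have sum_ps: "(\<Sum>i=1..2*k. ps i) = 1"
  proof -
    have "(\<Sum>i=1..2*k. ps i) = (\<Sum>m=1..k. ps (2*m-1) + ps (2*m))" by (rule sum_pairs)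
    also have "\<dots> = (\<Sum>m=1..k. w m / W)" using ps_blk by (intro sum.cong) auto
    also have "\<dots> = 1" unfolding sum_divide_distrib[symmetric] W_def[symmetric] using Wpos by simp
    finally show ?thesis .
  qed
  have pv: "pos_prob_vec (2*k) ps" unfolding pos_prob_vec_def using pos_ps sum_ps by blast
  have PG_ps: "PG (2*k) (blockQ \<rho>) ps = c"
  proof -
    have "(\<lambda>m. lo (ps(2*m-1)) (ps(2*m)) (\<rho> m)) ` {1..k} = (\<lambda>m. c) ` {1..k}"
    proof (intro image_cong refl)
      fix m assume m: "m \<in> {1..k}"
      have "lo (ps(2*m-1)) (ps(2*m)) (\<rho> m) = w m / (2*W) * (1 - \<rho> m)"
        using ps_blk[of m] m lo_eq[of "w m / (2*W)" "\<rho> m"] wpos[OF m] Wpos rho by auto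
      also have "\<dots> = c"
      proof -
        have "\<rho> m < 1" using rho m by blast
        then have "1 - \<rho> m \<noteq> 0" by simp
        then show ?thesis unfolding c_def w_def using Wpos by (simp add: field_simps)
      qed
      finally show "lo (ps(2*m-1)) (ps(2*m)) (\<rho> m) = c" .
    qed
    then show ?thesis using PG_eq[OF pos_ps k, of \<rho>] k by auto
  qed
  have bb: "(q(2*m-1) + q(2*m)) * (1 - \<rho> m) / 2 \<ge> t"
    if q: "pos_prob_vec (2*k) q" and m: "m \<in> {1..k}" and t: "PG (2*k) (blockQ \<rho>) q \<ge> t" for q m t
  proof -
    have qp: "\<forall>i\<in>{1..2*k}. q i > 0" using q unfolding pos_prob_vec_def by blast
    have "2*m-1 \<in> {1..2*k}" "2*m \<in> {1..2*k}" using m by auto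
    then have "q(2*m-1) > 0" "q(2*m) > 0" using qp by auto
    then show ?thesis using PG_block_ge[OF qp k m t] lo_le_u(1)[of "q(2*m-1)" "q(2*m)" "\<rho> m"] rho m
      by force
  qed
  have sumq: "(\<Sum>m=1..k. q(2*m-1) + q(2*m)) = 1" if "pos_prob_vec (2*k) q" for q
    using that sum_pairs[of q k] unfolding pos_prob_vec_def by simp
  have wW: "(\<Sum>m=1..k. w m / W) = 1" unfolding sum_divide_distrib[symmetric] W_def[symmetric]
    using Wpos by simp
  have sbound: "q(2*m-1) + q(2*m) \<ge> w m / W"
    if q: "pos_prob_vec (2*k) q" and m: "m \<in> {1..k}" and t: "PG (2*k) (blockQ \<rho>) q \<ge> c" for q m
  proof -
    have "(q(2*m-1) + q(2*m)) * (1 - \<rho> m) / 2 \<ge> 1/(2*W)" using bb[OF q m t] unfolding c_def .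
    moreover have "1 - \<rho> m > 0" using rho m by auto
    ultimately show ?thesis unfolding w_def using Wpos by (auto simp: field_simps)
  qed
  have opt: "PG (2*k) (blockQ \<rho>) q \<le> c" if q: "pos_prob_vec (2*k) q" for q
  proof (rule ccontr)
    assume "\<not> ?thesis"
    then have t: "PG (2*k) (blockQ \<rho>) q > c" by simp
    have "q(2*m-1) + q(2*m) > w m / W" if m: "m \<in> {1..k}" for m
    proof -
      have "(q(2*m-1) + q(2*m)) * (1 - \<rho> m) / 2 \<ge> PG (2*k) (blockQ \<rho>) q" using bb[OF q m] by simp
      then have "(q(2*m-1) + q(2*m)) * (1 - \<rho> m) / 2 > 1/(2*W)" using t unfolding c_def by linarith
      moreover have "1 - \<rho> m > 0" using rho m by auto
      ultimately show ?thesis unfolding w_def using Wpos by (auto simp: field_simps)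
    qed
    then have "(\<Sum>m=1..k. w m / W) < (\<Sum>m=1..k. q(2*m-1) + q(2*m))"
      using k by (intro sum_strict_mono) auto
    then show False using wW sumq[OF q] by simp
  qed
  show ?thesis
  proof (intro conjI allI impI)
    show "\<exists>p. pos_prob_vec (2 * k) p \<and>
            (\<forall>q. pos_prob_vec (2 * k) q \<longrightarrow> PG (2 * k) (blockQ \<rho>) q \<le> PG (2 * k) (blockQ \<rho>) p)"
      using pv opt PG_ps by auto
  next
    fix popt assume a: "pos_prob_vec (2 * k) popt \<and>
            (\<forall>q. pos_prob_vec (2 * k) q \<longrightarrow> PG (2 * k) (blockQ \<rho>) q \<le> PG (2 * k) (blockQ \<rho>) popt)"
    then have pp: "pos_prob_vec (2*k) popt" by blast
    have ge: "PG (2*k) (blockQ \<rho>) popt \<ge> c" using a pv PG_ps by metis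
    have PGeq: "PG (2*k) (blockQ \<rho>) popt = c" using ge opt[OF pp] by linarith
    then show "PG (2 * k) (blockQ \<rho>) popt =
                (\<Prod>l=1..k. 1 - \<rho> l) / (2 * (\<Sum>l=1..k. \<Prod>j\<in>{1..k} - {l}. 1 - \<rho> j))"
      unfolding target c_def .
    have sb: "popt(2*m-1) + popt(2*m) \<ge> w m / W" if "m \<in> {1..k}" for m
      using sbound[OF pp that ge] .
    have "(\<Sum>m=1..k. (popt(2*m-1) + popt(2*m)) - w m / W) = 0"
      using sumq[OF pp] wW by (simp add: sum_subtractf)
    then have seq: "popt(2*m-1) + popt(2*m) = w m / W" if "m \<in> {1..k}" for m
      using sb that by (subst (asm) sum_nonneg_eq_0_iff) auto
    show "\<forall>i\<in>{1..k}. popt (2 * i - 1) = alpha k \<rho> i / 2 \<and> popt (2 * i) = alpha k \<rho> i / 2"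
    proof
      fix m assume m: "m \<in> {1..k}"
      have qp: "\<forall>i\<in>{1..2*k}. popt i > 0" using pp unfolding pos_prob_vec_def by blast
      have "2*m-1 \<in> {1..2*k}" "2*m \<in> {1..2*k}" using m by auto
      then have ab: "popt(2*m-1) > 0" "popt(2*m) > 0" using qp by auto
      have r: "0 \<le> \<rho> m" "\<rho> m < 1" using rho m by auto
      have u: "(popt(2*m-1) + popt(2*m)) * (1 - \<rho> m) / 2 = c"
      proof -
        have "1 - \<rho> m \<noteq> 0" using r by simp
        then show ?thesis unfolding seq[OF m] c_def w_def using Wpos by (simp add: field_simps)
      qed
      have "lo (popt(2*m-1)) (popt(2*m)) (\<rho> m) \<ge> c" using PG_block_ge[OF qp k m ge] .
      moreover have "lo (popt(2*m-1)) (popt(2*m)) (\<rho> m) \<le> c"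
        using lo_le_u(1)[OF ab r] u by simp
      ultimately have "lo (popt(2*m-1)) (popt(2*m)) (\<rho> m) = (popt(2*m-1) + popt(2*m)) * (1 - \<rho> m) / 2"
        using u by simp
      then have eq: "popt(2*m-1) = popt(2*m)" using lo_le_u(2)[OF ab r] by blast
      show "popt (2 * m - 1) = alpha k \<rho> m / 2 \<and> popt (2 * m) = alpha k \<rho> m / 2"
        using seq[OF m] eq alpha_eq[OF m] by auto
    qed
  qed
qed

end
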